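(* Assume that the success probabilities $Q_a$, $a\in\mathcal{A}$, are pairwise distinct. Then there exists an optimal threshold-type age-dependent policy $\phi^*$ of the MDP $\Lambda$ whose action order $(b_1,\dots,b_K)$ satisfies, for every $1\le k<K$, $$b_{k+1}\in\arg\min_{a\in\mathcal{A}:\,Q_a>Q_{b_k}}\ \gamma_{b_k,a},\qquad \gamma_{b_k,a}=\frac{E_a-E_{b_k}}{Q_a-Q_{b_k}}.$$
   Context: Fix $N\in\mathbb{N}^+$ vehicle types $\mathcal{N}=\{1,\dots,N\}$ with arrival probabilities $p_n\in(0,1]$, mean operational costs $c_n\ge0$ and mean sensing capabilities $r_n\in(0,1]$. Fix $\beta\in(0,1)$, $\epsilon>0$. Actions: $\mathcal{A}=2^{\mathcal{N}}$. Success probability $Q_\emptyset=0$, $Q_a=1-\prod_{n\in a}(1-r_np_n)$; expected recruitment cost $E_a=\sum_{n\in a}p_nc_n$. The marginal cost-effectiveness of changing from action $a_i$ to $a_j$ (with $Q_{a_j}\ne Q_{a_i}$) is $\gamma_{a_i,a_j}=(E_{a_j}-E_{a_i})/(Q_{a_j}-Q_{a_i})$. Immediate cost at state $\delta\in\mathbb{N}^+$: $u(\delta,a)=(1-\beta)E_a-\beta\epsilon\big(Q_a(\delta^2+2\delta)-(1+\delta)^2\big)$. MDP $\Lambda$: states $\mathbb{N}^+$; from state $s$ under action $a$ move to $1$ w.p. $Q_a$ and to $s+1$ w.p. $1-Q_a$; average cost $V(\phi)=\limsup_{T\to\infty}\frac1T\mathbb{E}^\phi[\sum_{t=1}^Tu(S(t),A(t))]$,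 $S(1)=1$, to be minimized. A threshold-type age-dependent policy is a deterministic stationary policy $\phi:\mathbb{N}^+\to\mathcal{A}$ for which there are $K\in\mathbb{N}^+$, an action order $(b_1,\dots,b_K)$ with $b_k\ne b_{k+1}$, and integer thresholds $1\le\theta_{b_1\to b_2}\le\dots\le\theta_{b_{K-1}\to b_K}$ such that $\phi(s)=b_k$ for $\theta_{b_{k-1}\to b_k}\le s<\theta_{b_k\to b_{k+1}}$ (conventions $\theta_{b_0\to b_1}=1$, $\theta_{b_K\to b_{K+1}}=\infty$). *)

theory Defs
  imports "HOL-Probability.Probability"
begin

text \<open>Vehicle types are 1..N; actions are subsets of {1..N}.\<close>

definition actions :: "nat \<Rightarrow> nat set set" where
  "actions N = Pow {1..N}"

definition succ_prob :: "(nat \<Rightarrow> real) \<Rightarrow> (nat \<Rightarrow> real) \<Rightarrow> nat set \<Rightarrow> real" where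
  "succ_prob p r a = 1 - (\<Prod>n\<in>a. 1 - r n * p n)"

definition exp_cost :: "(nat \<Rightarrow> real) \<Rightarrow> (nat \<Rightarrow> real) \<Rightarrow> nat set \<Rightarrow> real" where
  "exp_cost p c a = (\<Sum>n\<in>a. p n * c n)"

definition gamma :: "(nat \<Rightarrow> real) \<Rightarrow> (nat \<Rightarrow> real) \<Rightarrow> (nat \<Rightarrow> real)
    \<Rightarrow> nat set \<Rightarrow> nat set \<Rightarrow> real" where
  "gamma p c r ai aj =
     (exp_cost p c aj - exp_cost p c ai) / (succ_prob p r aj - succ_prob p r ai)"

definition imm_cost :: "(nat \<Rightarrow> real) \<Rightarrow> (nat \<Rightarrow> real) \<Rightarrow> (nat \<Rightarrow> real) \<Rightarrow> real \<Rightarrow> real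
    \<Rightarrow> nat \<Rightarrow> nat set \<Rightarrow> real" where
  "imm_cost p c r \<beta> \<epsilon> \<delta> a =
     (1 - \<beta>) * exp_cost p c a
     - \<beta> * \<epsilon> * (succ_prob p r a * (real \<delta> ^ 2 + 2 * real \<delta>) - (1 + real \<delta>) ^ 2)"

text \<open>General (history-dependent, randomized) policies: given the history of past
  (state, action) pairs and the current state, a distribution over actions.\<close>
type_synonym policy = "(nat \<times> nat set) list \<Rightarrow> nat \<Rightarrow> nat set pmf"

definition admissible_policy :: "nat \<Rightarrow> policy \<Rightarrow> bool" where
  "admissible_policy N \<psi> \<longleftrightarrow> (\<forall>h s. set_pmf (\<psi> h s) \<subseteq> actions N)"

definition det_policy :: "(nat \<Rightarrow> nat set) \<Rightarrow> policy" where
  "det_policy \<phi> = (\<lambda>h s. return_pmf (\<phi> s))"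

definition transition :: "(nat \<Rightarrow> real) \<Rightarrow> (nat \<Rightarrow> real) \<Rightarrow> nat \<Rightarrow> nat set \<Rightarrow> nat pmf" where
  "transition p r s a =
     map_pmf (\<lambda>b. if b then 1 else s + 1) (bernoulli_pmf (succ_prob p r a))"

text \<open>Distribution of (history, current state) at time t+1; S(1) = 1.\<close>
primrec hist_dist :: "(nat \<Rightarrow> real) \<Rightarrow> (nat \<Rightarrow> real) \<Rightarrow> policy \<Rightarrow> nat
    \<Rightarrow> ((nat \<times> nat set) list \<times> nat) pmf" where
  "hist_dist p r \<psi> 0 = return_pmf ([], 1)"
| "hist_dist p r \<psi> (Suc t) =
     bind_pmf (hist_dist p r \<psi> t) (\<lambda>(h, s).
       bind_pmf (\<psi> h s) (\<lambda>a.
         map_pmf (\<lambda>s'. (h @ [(s, a)], s')) (transition p r s a)))"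

text \<open>Joint distribution of (S(t), A(t)) for t = 1, 2, ...\<close>
definition state_action_dist :: "(nat \<Rightarrow> real) \<Rightarrow> (nat \<Rightarrow> real) \<Rightarrow> policy \<Rightarrow> nat
    \<Rightarrow> (nat \<times> nat set) pmf" where
  "state_action_dist p r \<psi> t =
     bind_pmf (hist_dist p r \<psi> (t - 1)) (\<lambda>(h, s). map_pmf (\<lambda>a. (s, a)) (\<psi> h s))"

definition avg_cost :: "(nat \<Rightarrow> real) \<Rightarrow> (nat \<Rightarrow> real) \<Rightarrow> (nat \<Rightarrow> real) \<Rightarrow> real \<Rightarrow> real
    \<Rightarrow> policy \<Rightarrow> ereal" where
  "avg_cost p c r \<beta> \<epsilon> \<psi> =
     limsup (\<lambda>T. ereal ((1 / real T) * (\<Sum>t=1..T.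
        measure_pmf.expectation (state_action_dist p r \<psi> t)
          (\<lambda>(s, a). imm_cost p c r \<beta> \<epsilon> s a))))"

definition optimal_policy :: "nat \<Rightarrow> (nat \<Rightarrow> real) \<Rightarrow> (nat \<Rightarrow> real) \<Rightarrow> (nat \<Rightarrow> real)
    \<Rightarrow> real \<Rightarrow> real \<Rightarrow> policy \<Rightarrow> bool" where
  "optimal_policy N p c r \<beta> \<epsilon> \<psi> \<longleftrightarrow> admissible_policy N \<psi> \<and>
     (\<forall>\<psi>'. admissible_policy N \<psi>' \<longrightarrow> avg_cost p c r \<beta> \<epsilon> \<psi> \<le> avg_cost p c r \<beta> \<epsilon> \<psi>')"

text \<open>Threshold-type age-dependent policy with action order b 1, ..., b K and
  thresholds th k = theta_{b_k -> b_{k+1}} (k = 1..K-1), th 0 = 1 by convention,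
  and theta_{b_K -> b_{K+1}} = infinity.\<close>
definition threshold_policy :: "nat \<Rightarrow> (nat \<Rightarrow> nat set) \<Rightarrow> nat \<Rightarrow> (nat \<Rightarrow> nat set)
    \<Rightarrow> (nat \<Rightarrow> nat) \<Rightarrow> bool" where
  "threshold_policy N \<phi> K b th \<longleftrightarrow>
     K \<ge> 1 \<and>
     (\<forall>k\<in>{1..K}. b k \<in> actions N) \<and>
     (\<forall>k. 1 \<le> k \<and> k < K \<longrightarrow> b k \<noteq> b (Suc k)) \<and>
     th 0 = 1 \<and>
     (\<forall>k. 1 \<le> k \<and> k < K \<longrightarrow> th (k - 1) \<le> th k) \<and>
     (\<forall>s k. 1 \<le> s \<longrightarrow> 1 \<le> k \<longrightarrow> k \<le> K \<longrightarrow> th (k - 1) \<le> s \<longrightarrow> (k = K \<or> s < th k)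
        \<longrightarrow> \<phi> s = b k)"

end

theory Submission
  imports Defs
begin



locale mdp =
  fixes N :: nat and p c r :: "nat \<Rightarrow> real" and \<beta> \<epsilon> :: real
  assumes N1: "N \<ge> 1"
    and pr: "\<And>n. n \<in> {1..N} \<Longrightarrow> 0 < p n \<and> p n \<le> 1"
    and cr: "\<And>n. n \<in> {1..N} \<Longrightarrow> 0 \<le> c n"
    and rr: "\<And>n. n \<in> {1..N} \<Longrightarrow> 0 < r n \<and> r n \<le> 1"
    and b0: "0 < \<beta>" and b1: "\<beta> < 1" and e0: "0 < \<epsilon>"
    and inj: "inj_on (succ_prob p r) (actions N)"
begin

abbreviation "A \<equiv> actions N"
abbreviation "Q \<equiv> succ_prob p r"
abbreviation "E \<equiv> exp_cost p c"
abbreviation "u \<equiv> imm_cost p c r \<beta> \<epsilon>"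
definition "\<alpha> = 1 - \<beta>"
definition "k0 = \<beta> * \<epsilon>"
definition ff :: "nat \<Rightarrow> real" where "ff s = real s ^ 2 + 2 * real s"

lemma alpha_pos: "\<alpha> > 0" using b1 by (simp add: \<alpha>_def)
lemma k0_pos: "k0 > 0" using b0 e0 by (simp add: k0_def)

lemma finA: "finite A" by (simp add: actions_def)

lemma subA: "a \<in> A \<Longrightarrow> a \<subseteq> {1..N}" by (simp add: actions_def)

lemma Q_bounds: assumes "a \<in> A" shows "0 \<le> Q a" "Q a \<le> 1"
proof -
  have fa: "finite a" using subA[OF assms] finite_subset by blast
  have f: "0 \<le> 1 - r n * p n \<and> 1 - r n * p n \<le> 1" if "n \<in> a" for n
  proof -
    have "n \<in> {1..N}" using subA[OF assms] that by auto
    then have "0 < p n" "p n \<le> 1" "0 < r n" "r n \<le> 1" using pr rr by auto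
    then have "r n * p n \<le> 1 * 1" by (intro mult_mono) auto
    moreover have "0 \<le> r n * p n" using \<open>0 < p n\<close> \<open>0 < r n\<close> by simp
    ultimately show ?thesis by simp
  qed
  have "0 \<le> (\<Prod>n\<in>a. 1 - r n * p n)" using f by (intro prod_nonneg) auto
  moreover have "(\<Prod>n\<in>a. 1 - r n * p n) \<le> 1" using f by (intro prod_le_1) auto
  ultimately show "0 \<le> Q a" "Q a \<le> 1" by (auto simp: succ_prob_def)
qed

lemma E_nonneg: assumes "a \<in> A" shows "0 \<le> E a"
proof -
  have "0 \<le> p n * c n" if "n \<in> a" for n
    using subA[OF assms] that pr[of n] cr[of n] by auto
  then show ?thesis unfolding exp_cost_def by (intro sum_nonneg) auto
qed

lemma u_eq: "u s a = \<alpha> * E a + k0 + k0 * (1 - Q a) * ff s"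
  unfolding imm_cost_def \<alpha>_def k0_def ff_def by (simp add: algebra_simps power2_eq_square)

lemma single_in: "{1} \<in> A" using N1 by (simp add: actions_def)
lemma Q_single: "Q {1} > 0" using pr[of 1] rr[of 1] N1 by (simp add: succ_prob_def)

lemma ex_amax: "\<exists>am\<in>A. \<forall>a\<in>A. Q a \<le> Q am"
proof -
  have "finite (Q ` A)" "Q ` A \<noteq> {}" using finA single_in by auto
  then have "Max (Q ` A) \<in> Q ` A" by (rule Max_in)
  then obtain am where "am \<in> A" "Q am = Max (Q ` A)" by auto
  then show ?thesis using \<open>finite (Q ` A)\<close> by (metis Max_ge image_eqI)
qed

definition "am = (SOME am. am \<in> A \<and> (\<forall>a\<in>A. Q a \<le> Q am))"
lemma am: "am \<in> A" "\<And>a. a \<in> A \<Longrightarrow> Q a \<le> Q am"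
  using someI_ex[of "\<lambda>am. am \<in> A \<and> (\<forall>a\<in>A. Q a \<le> Q am)"] ex_amax unfolding am_def by auto

definition "q = Q am"
lemma q_pos: "q > 0" using am(2)[OF single_in] Q_single by (simp add: q_def)
lemma q_le1: "q \<le> 1" using Q_bounds am by (simp add: q_def)
lemma Q_lt_q: "a \<in> A \<Longrightarrow> a \<noteq> am \<Longrightarrow> Q a < q"
  using am inj unfolding q_def inj_on_def by (metis order_less_le)

definition F :: "real \<Rightarrow> nat set \<Rightarrow> real" where "F w a = \<alpha> * E a + (1 - Q a) * w"
definition Mn :: "real \<Rightarrow> nat set set" where "Mn w = {a\<in>A. \<forall>b\<in>A. F w a \<le> F w b}"
definition sel :: "real \<Rightarrow> nat set" where "sel w = arg_min_on (\<lambda>a. - Q a) (Mn w)"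
definition Phi :: "real \<Rightarrow> real" where "Phi w = F w (sel w)"

lemma Mn_ne: "Mn w \<noteq> {}" "finite (Mn w)"
proof -
  have "arg_min_on (F w) A \<in> A" "\<not>(\<exists>x\<in>A. F w x < F w (arg_min_on (F w) A))"
    using arg_min_if_finite[OF finA] single_in by auto
  then have "arg_min_on (F w) A \<in> Mn w" by (auto simp: Mn_def not_less)
  then show "Mn w \<noteq> {}" by auto
  show "finite (Mn w)" using finA by (simp add: Mn_def)
qed

lemma sel_Mn: "sel w \<in> Mn w" and sel_maxQ: "b \<in> Mn w \<Longrightarrow> Q b \<le> Q (sel w)"
  using arg_min_if_finite[OF Mn_ne(2)[of w] Mn_ne(1)[of w], where f="\<lambda>a. - Q a"] unfolding sel_def
  by (auto simp: not_less)

lemma sel_A: "sel w \<in> A" and sel_min: "b \<in> A \<Longrightarrow> F w (sel w) \<le> F w b"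
  using sel_Mn[of w] by (auto simp: Mn_def)

lemma sel_mono: assumes "w1 \<le> w2" shows "Q (sel w1) \<le> Q (sel w2)"
proof (cases "w1 = w2")
  case False
  then have lt: "w1 < w2" using assms by simp
  have 1: "F w1 (sel w1) \<le> F w1 (sel w2)" by (rule sel_min[OF sel_A])
  have 2: "F w2 (sel w2) \<le> F w2 (sel w1)" by (rule sel_min[OF sel_A])
  from 1 2 have "(Q (sel w2) - Q (sel w1)) * (w2 - w1) \<ge> 0"
    unfolding F_def by (simp add: algebra_simps)
  then show ?thesis using lt by (simp add: zero_le_mult_iff)
qed simp

lemma Phi_le: "b \<in> A \<Longrightarrow> Phi w \<le> F w b" unfolding Phi_def by (rule sel_min)

lemma Phi_mono: assumes "w \<le> w'" shows "Phi w \<le> Phi w'"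
proof -
  have "Phi w \<le> F w (sel w')" by (rule Phi_le[OF sel_A])
  also have "\<dots> \<le> F w' (sel w')" using assms Q_bounds(2)[OF sel_A[of w']]
    unfolding F_def by (auto intro!: add_left_mono mult_left_mono)
  finally show ?thesis by (simp add: Phi_def)
qed

lemma Phi_lip1: "Phi w' - Phi w \<le> \<bar>w' - w\<bar>"
proof -
  have "Phi w' \<le> F w' (sel w)" by (rule Phi_le[OF sel_A])
  moreover have "F w' (sel w) - F w (sel w) = (1 - Q (sel w)) * (w' - w)" by (simp add: F_def algebra_simps)
  moreover have "(1 - Q (sel w)) * (w' - w) \<le> (1 - Q (sel w)) * \<bar>w' - w\<bar>"
    using Q_bounds[OF sel_A[of w]] by (intro mult_left_mono) auto
  moreover have "(1 - Q (sel w)) * \<bar>w' - w\<bar> \<le> \<bar>w' - w\<bar>"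
    using Q_bounds[OF sel_A[of w]] by (intro mult_left_le_one_le) auto
  ultimately show ?thesis by (simp add: Phi_def)
qed

lemma Phi_lip: "\<bar>Phi w' - Phi w\<bar> \<le> \<bar>w' - w\<bar>"
  using Phi_lip1[of w' w] Phi_lip1[of w w'] by (simp add: abs_le_iff abs_minus_commute)

end


context mdp begin

definition "Ac = (1 - q) * k0 / q"
definition "Bc = 2 * (1 - q) * k0 / q ^ 2"
definition "Dc g = (\<alpha> * E am + k0 - g + (1 - q) * (Ac + Bc)) / q"
definition "P g s = Ac * real s ^ 2 + Bc * real s + Dc g"

lemma Ac_nn: "Ac \<ge> 0" and Bc_nn: "Bc \<ge> 0"
  using q_pos q_le1 k0_pos by (auto simp: Ac_def Bc_def)

lemma P_rec: "P g s = \<alpha> * E am + k0 + (1 - q) * (k0 * ff s + P g (Suc s)) - g"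
proof -
  have q0: "q \<noteq> 0" using q_pos by simp
  show ?thesis
    unfolding P_def Dc_def Ac_def Bc_def ff_def using q0
    by (simp add: field_simps power2_eq_square)
qed

lemma Dc_diff: "Dc g' - Dc g = - (g' - g) / q"
  unfolding Dc_def using q_pos by (simp add: field_simps)

definition "wstar = (\<Sum>a\<in>A. \<bar>\<alpha> * (E am - E a) / (q - Q a)\<bar>)"

lemma wstar_nn: "wstar \<ge> 0" unfolding wstar_def by (intro sum_nonneg) auto

lemma F_am: assumes "W \<ge> wstar" "a \<in> A" shows "F W am \<le> F W a"
proof (cases "a = am")
  case False
  then have lt: "Q a < q" using Q_lt_q assms by auto
  have "\<alpha> * (E am - E a) / (q - Q a) \<le> \<bar>\<alpha> * (E am - E a) / (q - Q a)\<bar>" by (rule abs_ge_self)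
  also have "\<dots> \<le> wstar" unfolding wstar_def
    by (rule member_le_sum[OF assms(2) _ finA, of "\<lambda>a. \<bar>\<alpha> * (E am - E a) / (q - Q a)\<bar>"]) auto
  finally have "\<alpha> * (E am - E a) / (q - Q a) \<le> W" using assms by simp
  then have "\<alpha> * (E am - E a) \<le> W * (q - Q a)" using lt by (simp add: pos_divide_le_eq)
  then show ?thesis unfolding F_def q_def by (simp add: algebra_simps)
qed simp

lemma Phi_am: assumes "W \<ge> wstar" shows "Phi W = F W am"
  using Phi_le[OF am(1), of W] F_am[OF assms sel_A[of W]] by (simp add: Phi_def)

definition "M = nat \<lceil>wstar / k0\<rceil> + 1"

lemma M1: "M \<ge> 1" by (simp add: M_def)

lemma M_big: assumes "M \<le> s" shows "wstar \<le> k0 * real s"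
proof -
  have "wstar / k0 \<le> real M" unfolding M_def by linarith
  also have "\<dots> \<le> real s" using assms by simp
  finally show ?thesis using k0_pos by (simp add: pos_divide_le_eq mult.commute)
qed

primrec hb :: "real \<Rightarrow> nat \<Rightarrow> real" where
  "hb g 0 = P g M"
| "hb g (Suc j) = k0 + Phi (k0 * ff (M - Suc j) + hb g j) - g"

definition "hh g s = (if M \<le> s then P g s else hb g (M - s))"

lemma hb_le_P: "j < M \<Longrightarrow> hb g j \<le> P g (M - j)"
proof (induction j)
  case (Suc j)
  then have ih: "hb g j \<le> P g (M - j)" by simp
  have e: "Suc (M - Suc j) = M - j" using Suc.prems by simp
  have "hb g (Suc j) \<le> k0 + F (k0 * ff (M - Suc j) + hb g j) am - g"
    using Phi_le[OF am(1)] by simp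
  also have "\<dots> \<le> k0 + F (k0 * ff (M - Suc j) + P g (M - j)) am - g"
    using ih q_le1 unfolding F_def q_def[symmetric] by (auto intro!: mult_left_mono)
  also have "\<dots> = P g (M - Suc j)"
    using P_rec[of g "M - Suc j"] e unfolding F_def q_def[symmetric] by simp
  finally show ?case .
qed simp

lemma hh_le_P: "1 \<le> s \<Longrightarrow> hh g s \<le> P g s"
  using hb_le_P[of "M - s" g] by (auto simp: hh_def)

lemma hb_decr: "g \<le> g' \<Longrightarrow> hb g' j \<le> hb g j - (g' - g)"
proof (induction j)
  case 0
  have "(g' - g) / q \<ge> (g' - g)" using 0 q_pos q_le1
    by (simp add: le_divide_eq mult_left_le_one_le mult_left_le)
  moreover have "(g - g') / q = - ((g' - g) / q)" by (simp add: minus_divide_left)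
  ultimately show ?case using Dc_diff[of g' g] by (simp add: P_def)
next
  case (Suc j)
  then show ?case using Phi_mono[of "k0 * ff (M - Suc j) + hb g' j" "k0 * ff (M - Suc j) + hb g j"]
    by simp
qed

lemma hh_decr: "g \<le> g' \<Longrightarrow> hh g' s \<le> hh g s - (g' - g)"
proof -
  assume a: "g \<le> g'"
  have "(g' - g) / q \<ge> (g' - g)" using a q_pos q_le1
    by (simp add: le_divide_eq mult_left_le_one_le mult_left_le)
  moreover have "(g - g') / q = - ((g' - g) / q)" by (simp add: minus_divide_left)
  ultimately show ?thesis using hb_decr[OF a] Dc_diff[of g' g] by (auto simp: hh_def P_def)
qed

lemma hb_lip: "\<bar>hb g j - hb g' j\<bar> \<le> (real j + 1 / q) * \<bar>g - g'\<bar>"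
proof (induction j)
  case 0
  have "\<bar>Dc g - Dc g'\<bar> = \<bar>g - g'\<bar> / q" using Dc_diff[of g g'] q_pos by (simp add: abs_minus_commute)
  then show ?case by (simp add: P_def)
next
  case (Suc j)
  let ?x = "k0 * ff (M - Suc j)"
  have "\<bar>hb g (Suc j) - hb g' (Suc j)\<bar> \<le> \<bar>Phi (?x + hb g j) - Phi (?x + hb g' j)\<bar> + \<bar>g - g'\<bar>"
    by simp
  also have "\<dots> \<le> \<bar>hb g j - hb g' j\<bar> + \<bar>g - g'\<bar>" using Phi_lip[of "?x + hb g j" "?x + hb g' j"] by simp
  also have "\<dots> \<le> (real j + 1 / q) * \<bar>g - g'\<bar> + \<bar>g - g'\<bar>" using Suc by simp
  finally show ?case by (simp add: algebra_simps)
qed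

definition "H g = hh g 1"

lemma H_lip: "\<bar>H g - H g'\<bar> \<le> (real M + 1 / q) * \<bar>g - g'\<bar>"
proof (cases "M \<le> 1")
  case True
  have "\<bar>Dc g - Dc g'\<bar> = \<bar>g - g'\<bar> / q" using Dc_diff[of g g'] q_pos by (simp add: abs_minus_commute)
  moreover have "\<bar>g - g'\<bar> / q \<le> (real M + 1 / q) * \<bar>g - g'\<bar>"
    by (simp add: algebra_simps)
  ultimately show ?thesis using True by (simp add: H_def hh_def P_def)
next
  case False
  have "(real (M - 1) + 1 / q) * \<bar>g - g'\<bar> \<le> (real M + 1 / q) * \<bar>g - g'\<bar>"
    by (intro mult_right_mono) auto
  then show ?thesis using False hb_lip[of g "M - 1" g'] by (simp add: H_def hh_def)
qed

lemma H_cont: "continuous_on S H"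
proof (rule lipschitz_on_continuous_on)
  show "(real M + 1 / q)-lipschitz_on S H"
    unfolding lipschitz_on_def dist_real_def using H_lip q_pos by auto
qed

lemma ex_g: "\<exists>g. H g = 0"
proof -
  define a where "a = min 0 (H 0)"
  define b where "b = max 0 (H 0)"
  have "H b \<le> H 0 - (b - 0)" unfolding H_def by (rule hh_decr) (simp add: b_def)
  then have hb': "H b \<le> 0" by (simp add: b_def)
  have "H 0 \<le> H a - (0 - a)" unfolding H_def by (rule hh_decr) (simp add: a_def)
  then have ha: "0 \<le> H a" by (simp add: a_def)
  have "a \<le> b" by (simp add: a_def b_def)
  from IVT2'[of H b 0 a, OF hb' ha this H_cont] show ?thesis by auto
qed

definition "g0 = (SOME g. H g = 0)"
lemma H_g0: "H g0 = 0" unfolding g0_def using ex_g by (rule someI_ex)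

definition "h = hh g0"

lemma h1: "h 1 = 0" using H_g0 by (simp add: H_def h_def)

lemma ABD_nn: "0 \<le> Ac + Bc + Dc g0"
  using hh_le_P[of 1 g0] H_g0 by (simp add: H_def P_def)

lemma P_lb: "1 \<le> s \<Longrightarrow> Ac + Bc + Dc g0 \<le> P g0 s"
proof -
  assume s: "1 \<le> s"
  have "Ac * 1 \<le> Ac * real s ^ 2" using s Ac_nn by (intro mult_left_mono) auto
  moreover have "Bc * 1 \<le> Bc * real s" using s Bc_nn by (intro mult_left_mono) auto
  ultimately show ?thesis by (simp add: P_def)
qed

lemma ff_ge: "real s \<le> ff s" unfolding ff_def by (simp add: power2_eq_square)

definition "W s = k0 * ff s + h (Suc s)"

lemma bellman_form: assumes "1 \<le> s" shows "h s = k0 + Phi (W s) - g0"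
proof (cases "M \<le> s")
  case True
  have "W s = k0 * ff s + P g0 (Suc s)" using True by (simp add: W_def h_def hh_def)
  moreover have "P g0 (Suc s) \<ge> 0" using P_lb[of "Suc s"] ABD_nn by simp
  moreover have "k0 * real s \<le> k0 * ff s" using k0_pos ff_ge by simp
  ultimately have "W s \<ge> wstar" using M_big[OF True] by linarith
  then have "Phi (W s) = F (W s) am" by (rule Phi_am)
  then show ?thesis using True P_rec[of g0 s]
    by (simp add: W_def h_def hh_def F_def q_def)
next
  case False
  then obtain j where j: "M - s = Suc j" by (metis Suc_diff_Suc not_le)
  have e1: "M - Suc j = s" using j False by simp
  have "h (Suc s) = hb g0 j"
  proof (cases "M = Suc s")
    case True then show ?thesis using j by (simp add: h_def hh_def)
  next
    case False
    have "M - Suc s = j" using j by arith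
    then show ?thesis using j False \<open>\<not> M \<le> s\<close> by (simp add: h_def hh_def)
  qed
  then show ?thesis using False j e1 by (simp add: h_def hh_def W_def)
qed

lemma h_mono_step: "1 \<le> s \<Longrightarrow> h s \<le> h (Suc s)"
proof (induction "M - s" arbitrary: s rule: less_induct)
  case less
  show ?case
  proof (cases "M \<le> s")
    case True
    have "Ac * real s ^ 2 \<le> Ac * real (Suc s) ^ 2" using Ac_nn by (intro mult_left_mono) (auto simp: power_mono)
    moreover have "Bc * real s \<le> Bc * real (Suc s)" using Bc_nn by (intro mult_left_mono) auto
    ultimately show ?thesis using True by (simp add: h_def hh_def P_def)
  next
    case False
    have ih: "h (Suc s) \<le> h (Suc (Suc s))" using less.hyps[of "Suc s"] False by simp
    have "W s \<le> W (Suc s)" using ih ff_ge k0_pos unfolding W_def ff_def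
      by (auto intro!: add_mono mult_left_mono simp: power_mono)
    then show ?thesis using bellman_form[of s] bellman_form[of "Suc s"] less.prems Phi_mono by force
  qed
qed

lemma h_mono': "s \<le> t \<Longrightarrow> 1 \<le> s \<Longrightarrow> h s \<le> h t"
proof (induction t rule: dec_induct)
  case (step n) then show ?case using h_mono_step[of n] by simp
qed simp

lemma h_mono: "1 \<le> s \<Longrightarrow> s \<le> t \<Longrightarrow> h s \<le> h t" using h_mono' by blast

lemma h_nn: "1 \<le> s \<Longrightarrow> 0 \<le> h s" using h_mono[of 1 s] h1 by simp

lemma W_mono: "1 \<le> s \<Longrightarrow> s \<le> t \<Longrightarrow> W s \<le> W t"
  unfolding W_def ff_def using h_mono[of "Suc s" "Suc t"] k0_pos
  by (auto intro!: add_mono mult_left_mono simp: power_mono)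

lemma W_ge: "1 \<le> s \<Longrightarrow> k0 * real s \<le> W s"
  unfolding W_def using h_nn[of "Suc s"] ff_ge[of s] k0_pos by (simp add: add_increasing2)

definition "Ch = Ac + Bc"
definition "Dh = \<bar>Dc g0\<bar> + (\<Sum>i<M. \<bar>h i\<bar>)"

lemma h_upper: "h s \<le> Ch * real s ^ 2 + Dh"
proof (cases "M \<le> s")
  case True
  have "Bc * real s \<le> Bc * real s ^ 2" using Bc_nn True M1
    by (intro mult_left_mono) (auto simp: power2_eq_square)
  moreover have "0 \<le> (\<Sum>i<M. \<bar>h i\<bar>)" by (simp add: sum_nonneg)
  moreover have "h s = P g0 s" using True by (simp add: h_def hh_def)
  moreover have "Dc g0 \<le> \<bar>Dc g0\<bar>" by simp
  moreover have "(Ac + Bc) * real s ^ 2 = Ac * real s ^ 2 + Bc * real s ^ 2" by (simp add: algebra_simps)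
  ultimately show ?thesis unfolding Ch_def Dh_def P_def by linarith
next
  case False
  have "h s \<le> \<bar>h s\<bar>" by simp
  also have "\<dots> \<le> (\<Sum>i<M. \<bar>h i\<bar>)" using False
    by (intro member_le_sum[of s "{..<M}" "\<lambda>i. \<bar>h i\<bar>"]) auto
  finally show ?thesis using Ac_nn Bc_nn by (simp add: Ch_def Dh_def add_increasing)
qed

lemma Ch_nn: "Ch \<ge> 0" and Dh_nn: "Dh \<ge> 0"
  using Ac_nn Bc_nn by (auto simp: Ch_def Dh_def sum_nonneg)

end


context mdp begin

abbreviation "gam \<equiv> gamma p c r"

definition "phi s = sel (W s)"
definition "Cset = sel ` {w. W 1 \<le> w}"

lemma Cset_A: "Cset \<subseteq> A" using sel_A by (auto simp: Cset_def)
lemma Cset_fin: "finite Cset" using Cset_A finA finite_subset by blast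
lemma Cset_inj: "inj_on Q Cset" using inj Cset_A inj_on_subset by blast

lemma phi_C: "1 \<le> s \<Longrightarrow> phi s \<in> Cset" using W_mono[of 1 s] by (auto simp: phi_def Cset_def)
lemma phi_A: "phi s \<in> A" by (simp add: phi_def sel_A)
lemma phi_mono: "1 \<le> s \<Longrightarrow> s \<le> t \<Longrightarrow> Q (phi s) \<le> Q (phi t)"
  unfolding phi_def by (intro sel_mono W_mono)

lemma F_diff: assumes "Q x \<noteq> Q b" shows "F w x - F w b = (Q x - Q b) * (\<alpha> * gam b x - w)"
proof -
  have "Q x - Q b \<noteq> 0" using assms by simp
  then have "E x - E b = gam b x * (Q x - Q b)" by (simp add: gamma_def)
  then have e: "E x = E b + gam b x * (Q x - Q b)" by simp
  show ?thesis unfolding F_def e by (simp add: algebra_simps)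
qed

lemma gamma_step:
  assumes bC: "b \<in> Cset" and b'C: "b' \<in> Cset" and lt: "Q b < Q b'"
    and nb: "\<forall>c\<in>Cset. \<not> (Q b < Q c \<and> Q c < Q b')"
    and aA: "a \<in> A" and la: "Q b < Q a"
  shows "gam b b' \<le> gam b a"
proof -
  obtain w where w: "W 1 \<le> w" "b = sel w" using bC by (auto simp: Cset_def)
  obtain w' where w': "W 1 \<le> w'" "b' = sel w'" using b'C by (auto simp: Cset_def)
  have bA: "b \<in> A" and b'A: "b' \<in> A" using bC b'C Cset_A by auto
  define G where "G = {x\<in>A. Q b < Q x}"
  have Gf: "finite G" "G \<noteq> {}" using finA aA la by (auto simp: G_def)
  define a0 where "a0 = arg_min_on (gam b) G"
  have a0G: "a0 \<in> G" and a0min: "\<And>x. x \<in> G \<Longrightarrow> gam b a0 \<le> gam b x"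
    using arg_min_if_finite[OF Gf, of "gam b"] unfolding a0_def by (auto simp: not_less)
  define gs where "gs = gam b a0"
  define w2 where "w2 = \<alpha> * gs"
  have a0A: "a0 \<in> A" and la0: "Q b < Q a0" using a0G by (auto simp: G_def)
  have "0 \<le> F w a0 - F w b" using sel_min[OF a0A, of w] w by simp
  then have "0 \<le> (Q a0 - Q b) * (\<alpha> * gam b a0 - w)" using F_diff[of a0 b w] la0 by simp
  then have ww2: "w \<le> w2" using la0 by (simp add: zero_le_mult_iff w2_def gs_def)
  have bMn: "b \<in> Mn w2" unfolding Mn_def
  proof (intro CollectI conjI ballI bA)
    fix x assume xA: "x \<in> A"
    consider "Q b < Q x" | "Q x < Q b" | "Q x = Q b" by linarith
    then show "F w2 b \<le> F w2 x"
    proof cases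
      case 1
      then have "gs \<le> gam b x" using a0min xA by (auto simp: G_def gs_def)
      then have "0 \<le> (Q x - Q b) * (\<alpha> * gam b x - w2)"
        using 1 alpha_pos by (auto simp: w2_def intro!: mult_nonneg_nonneg)
      then show ?thesis using F_diff[of x b w2] 1 by simp
    next
      case 2
      have "F w b \<le> F w x" using sel_min[OF xA, of w] w by simp
      moreover have "F w2 x - F w2 b = (F w x - F w b) + (Q b - Q x) * (w2 - w)"
        by (simp add: F_def algebra_simps)
      moreover have "0 \<le> (Q b - Q x) * (w2 - w)" using 2 ww2 by simp
      ultimately show ?thesis by linarith
    next
      case 3
      then have "x = b" using inj xA bA by (auto simp: inj_on_def)
      then show ?thesis by simp
    qed
  qed
  have "F w2 a0 = F w2 b" using F_diff[of a0 b w2] la0 by (simp add: w2_def gs_def)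
  then have a0Mn: "a0 \<in> Mn w2" using bMn a0A by (simp add: Mn_def)
  define ast where "ast = sel w2"
  have la0s: "Q a0 \<le> Q ast" unfolding ast_def by (rule sel_maxQ[OF a0Mn])
  have astC: "ast \<in> Cset" using w ww2 by (auto simp: ast_def Cset_def)
  have lb'ast: "Q b' \<le> Q ast" using nb astC la0 la0s by force
  have "gam b b' \<le> gs"
  proof (rule ccontr)
    assume "\<not> gam b b' \<le> gs"
    then have gt: "gs < gam b b'" by simp
    have "0 \<le> F w' b - F w' b'" using sel_min[OF bA, of w'] w' by simp
    then have "(Q b' - Q b) * (\<alpha> * gam b b' - w') \<le> 0" using F_diff[of b' b w'] lt by simp
    then have "\<alpha> * gam b b' \<le> w'" using lt by (simp add: mult_le_0_iff)
    moreover have "w2 < \<alpha> * gam b b'" using gt alpha_pos by (simp add: w2_def)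
    ultimately have "w2 \<le> w'" by simp
    then have "Q ast \<le> Q b'" unfolding ast_def w' by (rule sel_mono)
    then have "Q ast = Q b'" using lb'ast by simp
    then have "ast = b'" using inj sel_A b'A by (auto simp: inj_on_def ast_def)
    then have "b' \<in> Mn w2" using sel_Mn[of w2] unfolding ast_def by simp
    then have "F w2 b' \<le> F w2 b" using bA by (simp add: Mn_def)
    then have "(Q b' - Q b) * (\<alpha> * gam b b' - w2) \<le> 0" using F_diff[of b' b w2] lt by simp
    then have "\<alpha> * gam b b' \<le> \<alpha> * gs" using lt by (simp add: mult_le_0_iff w2_def)
    then show False using gt alpha_pos by simp
  qed
  also have "gs \<le> gam b a" using a0min aA la by (simp add: G_def gs_def)
  finally show ?thesis .
qed

definition "xs = sorted_list_of_set (Q ` Cset)"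
definition "K = length xs"
definition "bb k = the_inv_into Cset Q (xs ! (k - 1))"

lemma xs_set: "set xs = Q ` Cset" using Cset_fin by (simp add: xs_def)
lemma xs_sorted: "sorted_wrt (<) xs" by (simp add: xs_def)

lemma W1_C: "sel (W 1) \<in> Cset" by (auto simp: Cset_def)

lemma K1: "K \<ge> 1"
proof -
  have "xs \<noteq> []" using xs_set W1_C by auto
  then show ?thesis by (cases xs) (auto simp: K_def)
qed

lemma bb_C: assumes "1 \<le> k" "k \<le> K" shows "bb k \<in> Cset" "Q (bb k) = xs ! (k - 1)"
proof -
  have "xs ! (k - 1) \<in> Q ` Cset" using assms xs_set by (metis K_def Suc_le_eq Suc_pred less_one not_le nth_mem le_less_trans diff_less zero_less_one)
  then show "bb k \<in> Cset" "Q (bb k) = xs ! (k - 1)"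
    unfolding bb_def using Cset_inj by (auto intro: the_inv_into_into f_the_inv_into_f)
qed

lemma bb_A: "1 \<le> k \<Longrightarrow> k \<le> K \<Longrightarrow> bb k \<in> A" using bb_C Cset_A by blast

lemma C_bb: assumes "x \<in> Cset" shows "\<exists>k. 1 \<le> k \<and> k \<le> K \<and> x = bb k"
proof -
  have "Q x \<in> set xs" using assms xs_set by auto
  then obtain i where i: "i < K" "xs ! i = Q x" by (auto simp: in_set_conv_nth K_def)
  then have "Q (bb (Suc i)) = Q x" "bb (Suc i) \<in> Cset" using bb_C[of "Suc i"] by auto
  then have "bb (Suc i) = x" using Cset_inj assms by (auto simp: inj_on_def)
  then show ?thesis using i by (intro exI[of _ "Suc i"]) auto
qed

lemma bb_less: assumes "1 \<le> j" "j \<le> K" "1 \<le> k" "k \<le> K"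
  shows "Q (bb j) < Q (bb k) \<longleftrightarrow> j < k"
proof
  assume "j < k"
  then show "Q (bb j) < Q (bb k)" using bb_C assms xs_sorted sorted_wrt_nth_less[of "(<)" xs "j - 1" "k - 1"]
    by (simp add: K_def)
next
  assume a: "Q (bb j) < Q (bb k)"
  show "j < k"
  proof (rule ccontr)
    assume "\<not> j < k"
    then have "k = j \<or> k < j" by auto
    then show False
    proof
      assume "k < j"
      then have "Q (bb k) < Q (bb j)" using bb_C assms xs_sorted sorted_wrt_nth_less[of "(<)" xs "k - 1" "j - 1"]
        by (simp add: K_def)
      then show False using a by simp
    qed (use a in simp)
  qed
qed

definition "th k = (if k = 0 then 1 else (LEAST s. 1 \<le> s \<and> Q (bb k) < Q (phi s)))"

lemma th_ex: assumes "1 \<le> k" "k < K" shows "\<exists>s. 1 \<le> s \<and> Q (bb k) < Q (phi s)"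
proof -
  obtain w where w: "W 1 \<le> w" "bb K = sel w" using bb_C(1)[of K] K1 by (auto simp: Cset_def)
  define s where "s = nat \<lceil>w / k0\<rceil> + 1"
  have "w / k0 \<le> real s" unfolding s_def by linarith
  then have "w \<le> k0 * real s" using k0_pos by (simp add: pos_divide_le_eq mult.commute)
  also have "\<dots> \<le> W s" using W_ge[of s] by (simp add: s_def)
  finally have "Q (bb K) \<le> Q (phi s)" unfolding phi_def w by (rule sel_mono)
  moreover have "Q (bb k) < Q (bb K)" using bb_less[of k K] assms K1 by simp
  ultimately show ?thesis by (intro exI[of _ s]) (auto simp: s_def)
qed

lemma th_prop: assumes "1 \<le> k" "k < K" shows "1 \<le> th k" "Q (bb k) < Q (phi (th k))"
  using LeastI_ex[OF th_ex[OF assms]] assms by (auto simp: th_def)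

lemma th_least: assumes "1 \<le> k" "1 \<le> s" "Q (bb k) < Q (phi s)" shows "th k \<le> s"
  using assms by (auto simp: th_def intro: Least_le)

lemma threshold: "threshold_policy N phi K bb th"
  unfolding threshold_policy_def
proof (intro conjI allI impI ballI)
  show "1 \<le> K" by (rule K1)
  show "bb k \<in> A" if "k \<in> {1..K}" for k using bb_A that by auto
  show "bb k \<noteq> bb (Suc k)" if "1 \<le> k \<and> k < K" for k using bb_less[of k "Suc k"] that by auto
  show "th 0 = 1" by (simp add: th_def)
  show "th (k - 1) \<le> th k" if k: "1 \<le> k \<and> k < K" for k
  proof (cases "k = 1")
    case True then show ?thesis using th_prop(1)[of 1] k by (simp add: th_def)
  next
    case False
    have "Q (bb (k - 1)) < Q (bb k)" using bb_less[of "k - 1" k] k False by auto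
    then show ?thesis using th_prop[of k] k False by (intro th_least) auto
  qed
  fix s k assume s1: "1 \<le> s" and k1: "1 \<le> k" and kK: "k \<le> K" and ths: "th (k - 1) \<le> s"
    and kor: "k = K \<or> s < th k"
  obtain j where j: "1 \<le> j" "j \<le> K" "phi s = bb j" using C_bb[OF phi_C[OF s1]] by auto
  have "j \<le> k"
  proof (cases "k = K")
    case False
    then have "s < th k" using kor by simp
    then have "\<not> Q (bb k) < Q (phi s)" using th_least[OF k1 s1] by force
    then show ?thesis using bb_less[of k j] j k1 kK by auto
  qed (use j in simp)
  moreover have "k \<le> j"
  proof (cases "k = 1")
    case False
    have "Q (bb (k - 1)) < Q (phi (th (k - 1)))" using th_prop[of "k - 1"] k1 kK False by auto
    also have "\<dots> \<le> Q (phi s)" using phi_mono th_prop(1)[of "k - 1"] k1 kK False ths by auto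
    finally have "Q (bb (k - 1)) < Q (bb j)" using j by simp
    moreover have "1 \<le> k - 1" "k - 1 \<le> K" using k1 kK False by auto
    ultimately have "k - 1 < j" using bb_less[of "k - 1" j] j by blast
    then show ?thesis by simp
  qed (use j in simp)
  ultimately show "phi s = bb k" using j by simp
qed

lemma order_prop: assumes "1 \<le> k" "k < K"
  shows "Q (bb (Suc k)) > Q (bb k) \<and>
    (\<forall>a\<in>A. Q a > Q (bb k) \<longrightarrow> gam (bb k) (bb (Suc k)) \<le> gam (bb k) a)"
proof (intro conjI ballI impI)
  show lt: "Q (bb (Suc k)) > Q (bb k)" using bb_less[of k "Suc k"] assms by simp
  fix a assume "a \<in> A" "Q a > Q (bb k)"
  moreover have "\<forall>c\<in>Cset. \<not> (Q (bb k) < Q c \<and> Q c < Q (bb (Suc k)))"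
  proof (intro ballI notI)
    fix c assume "c \<in> Cset" "Q (bb k) < Q c \<and> Q c < Q (bb (Suc k))"
    then obtain j where "1 \<le> j" "j \<le> K" "c = bb j" "Q (bb k) < Q (bb j)" "Q (bb j) < Q (bb (Suc k))"
      using C_bb by blast
    then show False using bb_less[of k j] bb_less[of j "Suc k"] assms by auto
  qed
  ultimately show "gam (bb k) (bb (Suc k)) \<le> gam (bb k) a"
    using gamma_step[of "bb k" "bb (Suc k)" a] bb_C assms lt by auto
qed

end



lemma pmf_integral_bind:
  fixes f :: "'b \<Rightarrow> real"
  assumes B: "\<And>y. y \<in> set_pmf (bind_pmf M N) \<Longrightarrow> \<bar>f y\<bar> \<le> B"
  shows "measure_pmf.expectation (bind_pmf M N) f
       = measure_pmf.expectation M (\<lambda>x. measure_pmf.expectation (N x) f)"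
proof -
  define f' where "f' y = (if y \<in> set_pmf (bind_pmf M N) then f y else 0)" for y
  have 1: "measure_pmf.expectation (bind_pmf M N) f = measure_pmf.expectation (bind_pmf M N) f'"
    by (intro integral_cong_AE) (auto simp: f'_def AE_measure_pmf_iff)
  have b: "\<bar>f' y\<bar> \<le> \<bar>B\<bar>" for y using B[of y] by (force simp: f'_def)
  have 2: "measure_pmf.expectation (bind_pmf M N) f' = (\<integral>x. measure_pmf.expectation (N x) f' \<partial>measure_pmf M)"
    unfolding measure_pmf_bind
    apply (rule integral_bind[where K="count_space UNIV" and B="\<bar>B\<bar>" and B'=1])
    using measurable_measure_pmf[of N] b
    by (auto simp: measure_pmf.emeasure_space_1 measure_pmf.finite_measure_axioms)
  have 3: "(\<integral>x. measure_pmf.expectation (N x) f' \<partial>measure_pmf M) = (\<integral>x. measure_pmf.expectation (N x) f \<partial>measure_pmf M)"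
    by (intro integral_cong_AE) (auto simp: f'_def AE_measure_pmf_iff intro!: integral_cong_AE)
  show ?thesis using 1 2 3 by simp
qed

lemma pmf_integral_bind_fin:
  fixes f :: "'b \<Rightarrow> real"
  assumes "finite (set_pmf (bind_pmf M N))"
  shows "measure_pmf.expectation (bind_pmf M N) f
       = measure_pmf.expectation M (\<lambda>x. measure_pmf.expectation (N x) f)"
  by (rule pmf_integral_bind[where B="\<Sum>y\<in>set_pmf (bind_pmf M N). \<bar>f y\<bar>"])
     (rule member_le_sum[OF _ _ assms], auto)

context mdp begin

lemma trans_supp: "set_pmf (transition p r s a) \<subseteq> {1, Suc s}"
  by (auto simp: transition_def)

lemma trans_exp: assumes "a \<in> A"
  shows "measure_pmf.expectation (transition p r s a) f = Q a * f 1 + (1 - Q a) * f (Suc s)"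
  using Q_bounds[OF assms] by (simp add: transition_def)

abbreviation "hdd \<psi> t \<equiv> hist_dist p r \<psi> t"

lemma psi_fin: "admissible_policy N \<psi> \<Longrightarrow> finite (set_pmf (\<psi> hs s))"
  using finA finite_subset unfolding admissible_policy_def by blast

lemma psi_A: "admissible_policy N \<psi> \<Longrightarrow> a \<in> set_pmf (\<psi> hs s) \<Longrightarrow> a \<in> A"
  unfolding admissible_policy_def by blast

lemma hd_fin: assumes "admissible_policy N \<psi>" shows "finite (set_pmf (hdd \<psi> t))"
proof (induction t)
  case 0 then show ?case by simp
next
  case (Suc t)
  have f: "finite (set_pmf (transition p r s a))" for s a using trans_supp finite_subset by blast
  show ?case using Suc psi_fin[OF assms] f by (auto simp: case_prod_unfold)
qed

lemma hd_supp: "x \<in> set_pmf (hdd \<psi> t) \<Longrightarrow> 1 \<le> snd x \<and> snd x \<le> Suc t"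
proof (induction t arbitrary: x)
  case 0 then show ?case by simp
next
  case (Suc t)
  then show ?case using trans_supp by (fastforce simp: case_prod_unfold)
qed

definition Ex :: "policy \<Rightarrow> nat \<Rightarrow> (nat \<Rightarrow> nat set \<Rightarrow> real) \<Rightarrow> real" where
  "Ex \<psi> t k = measure_pmf.expectation (hdd \<psi> t)
      (\<lambda>x. measure_pmf.expectation (\<psi> (fst x) (snd x)) (\<lambda>a. k (snd x) a))"

lemma Ex_mono:
  assumes adm: "admissible_policy N \<psi>"
    and le: "\<And>x a. x \<in> set_pmf (hdd \<psi> t) \<Longrightarrow> a \<in> set_pmf (\<psi> (fst x) (snd x)) \<Longrightarrow> k (snd x) a \<le> k' (snd x) a"
  shows "Ex \<psi> t k \<le> Ex \<psi> t k'"
  unfolding Ex_def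
  using hd_fin[OF adm] psi_fin[OF adm] le
  by (intro integral_mono_AE integrable_measure_pmf_finite AE_pmfI) auto

lemma Ex_add:
  assumes adm: "admissible_policy N \<psi>"
  shows "Ex \<psi> t (\<lambda>s a. k s a + k' s a) = Ex \<psi> t k + Ex \<psi> t k'"
proof -
  have "Ex \<psi> t (\<lambda>s a. k s a + k' s a) = measure_pmf.expectation (hdd \<psi> t)
      (\<lambda>x. measure_pmf.expectation (\<psi> (fst x) (snd x)) (\<lambda>a. k (snd x) a)
         + measure_pmf.expectation (\<psi> (fst x) (snd x)) (\<lambda>a. k' (snd x) a))"
  proof -
    have "measure_pmf.expectation (\<psi> hs s) (\<lambda>a. k s a + k' s a)
       = measure_pmf.expectation (\<psi> hs s) (k s) + measure_pmf.expectation (\<psi> hs s) (k' s)" for hs s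
      by (rule Bochner_Integration.integral_add; intro integrable_measure_pmf_finite psi_fin[OF adm])
    then show ?thesis unfolding Ex_def by simp
  qed
  also have "\<dots> = Ex \<psi> t k + Ex \<psi> t k'"
    unfolding Ex_def using hd_fin[OF adm] by (intro Bochner_Integration.integral_add integrable_measure_pmf_finite)
  finally show ?thesis .
qed

lemma Ex_cmult: "Ex \<psi> t (\<lambda>s a. C * k s a) = C * Ex \<psi> t k"
  unfolding Ex_def by simp

lemma Ex_state: "Ex \<psi> t (\<lambda>s a. f s) = measure_pmf.expectation (hdd \<psi> t) (\<lambda>x. f (snd x))"
  unfolding Ex_def by simp

lemma Ex_const: "Ex \<psi> t (\<lambda>s a. C) = C"
  unfolding Ex_def by simp

lemma U_eq: assumes adm: "admissible_policy N \<psi>"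
  shows "measure_pmf.expectation (state_action_dist p r \<psi> (Suc t)) (\<lambda>(s, a). u s a) = Ex \<psi> t u"
proof -
  have fin: "finite (set_pmf (bind_pmf (hdd \<psi> t) (\<lambda>(h, s). map_pmf (\<lambda>a. (s, a)) (\<psi> h s))))"
    using hd_fin[OF adm] psi_fin[OF adm] by (auto simp: case_prod_unfold)
  show ?thesis
    unfolding state_action_dist_def Ex_def diff_Suc_1
    by (subst pmf_integral_bind_fin[OF fin]) (auto simp: case_prod_unfold intro!: integral_cong)
qed

lemma V_eq: fixes f :: "nat \<Rightarrow> real" assumes adm: "admissible_policy N \<psi>"
  shows "measure_pmf.expectation (hdd \<psi> (Suc t)) (\<lambda>x. f (snd x))
       = Ex \<psi> t (\<lambda>s a. Q a * f 1 + (1 - Q a) * f (Suc s))"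
proof -
  have ftr: "finite (set_pmf (transition p r s a))" for s a using trans_supp finite_subset by blast
  have fin: "finite (set_pmf (hdd \<psi> (Suc t)))" by (rule hd_fin[OF adm])
  have fin2: "finite (set_pmf (bind_pmf (\<psi> hs s) (\<lambda>a. map_pmf (\<lambda>s'. (hs @ [(s, a)], s')) (transition p r s a))))"
    for hs s using psi_fin[OF adm] ftr by auto
  have "measure_pmf.expectation (hdd \<psi> (Suc t)) (\<lambda>x. f (snd x))
     = measure_pmf.expectation (hdd \<psi> t) (\<lambda>x. measure_pmf.expectation (\<psi> (fst x) (snd x))
          (\<lambda>a. measure_pmf.expectation (transition p r (snd x) a) f))"
    using fin unfolding hist_dist.simps
    by (simp add: pmf_integral_bind_fin pmf_integral_bind_fin[OF fin2] case_prod_unfold)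
  also have "\<dots> = Ex \<psi> t (\<lambda>s a. Q a * f 1 + (1 - Q a) * f (Suc s))"
    unfolding Ex_def
    by (rule Bochner_Integration.integral_cong[OF refl], rule integral_cong_AE) (auto simp: trans_exp psi_A[OF adm] AE_measure_pmf_iff)
  finally show ?thesis .
qed

lemma V0: fixes f :: "nat \<Rightarrow> real" shows "measure_pmf.expectation (hdd \<psi> 0) (\<lambda>x. f (snd x)) = f 1"
  unfolding hist_dist.simps by (subst Probability_Mass_Function.expectation_return_pmf) simp

end


context mdp begin

lemma bell_ineq: assumes "1 \<le> s" "a \<in> A"
  shows "g0 + h s \<le> u s a + (Q a * h 1 + (1 - Q a) * h (Suc s))"
proof -
  have "Phi (W s) \<le> F (W s) a" by (rule Phi_le[OF assms(2)])
  then show ?thesis using bellman_form[OF assms(1)] h1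
    by (simp add: u_eq F_def W_def algebra_simps)
qed

lemma bell_eq: assumes "1 \<le> s"
  shows "g0 + h s = u s (phi s) + (Q (phi s) * h 1 + (1 - Q (phi s)) * h (Suc s))"
proof -
  have "Phi (W s) = F (W s) (phi s)" by (simp add: Phi_def phi_def)
  then show ?thesis using bellman_form[OF assms(1)] h1
    by (simp add: u_eq F_def W_def algebra_simps)
qed

definition "UU \<psi> t = measure_pmf.expectation (state_action_dist p r \<psi> t) (\<lambda>(s, a). u s a)"
definition "VV \<psi> t = measure_pmf.expectation (hdd \<psi> t) (\<lambda>x. h (snd x))"
definition "SS \<psi> T = (\<Sum>t=1..T. UU \<psi> t)"

lemma avg_SS: "avg_cost p c r \<beta> \<epsilon> \<psi> = limsup (\<lambda>T. ereal (1 / real T * SS \<psi> T))"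
  by (simp add: avg_cost_def SS_def UU_def)

lemma step_split: assumes adm: "admissible_policy N \<psi>"
  shows "UU \<psi> (Suc t) + VV \<psi> (Suc t) = Ex \<psi> t (\<lambda>s a. u s a + (Q a * h 1 + (1 - Q a) * h (Suc s)))"
    and "g0 + VV \<psi> t = Ex \<psi> t (\<lambda>s a. g0 + h s)"
  using U_eq[OF adm, of t] V_eq[OF adm, where f=h and t=t] Ex_add[OF adm, of t u] Ex_add[OF adm, of t "\<lambda>s a. g0" "\<lambda>s a. h s"]
    Ex_const[of \<psi> t g0] Ex_state[of \<psi> t h]
  by (simp_all add: UU_def VV_def)

lemma step_ge: assumes adm: "admissible_policy N \<psi>"
  shows "g0 + VV \<psi> t \<le> UU \<psi> (Suc t) + VV \<psi> (Suc t)"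
  unfolding step_split[OF adm]
proof (rule Ex_mono[OF adm])
  fix x a assume x: "x \<in> set_pmf (hdd \<psi> t)" and a: "a \<in> set_pmf (\<psi> (fst x) (snd x))"
  have "1 \<le> snd x" using hd_supp[OF x] by simp
  then show "g0 + h (snd x) \<le> u (snd x) a + (Q a * h 1 + (1 - Q a) * h (Suc (snd x)))"
    using bell_ineq psi_A[OF adm a] by blast
qed

lemma det_adm: "admissible_policy N (det_policy phi)"
  by (simp add: admissible_policy_def det_policy_def phi_A)

lemma step_eq: "g0 + VV (det_policy phi) t = UU (det_policy phi) (Suc t) + VV (det_policy phi) (Suc t)"
proof -
  have "Ex (det_policy phi) t (\<lambda>s a. g0 + h s)
      = Ex (det_policy phi) t (\<lambda>s a. u s a + (Q a * h 1 + (1 - Q a) * h (Suc s)))"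
    by (intro antisym Ex_mono[OF det_adm]) (auto simp: det_policy_def bell_eq dest: hd_supp)
  then show ?thesis unfolding step_split[OF det_adm] .
qed

lemma VV0: "VV \<psi> 0 = 0" unfolding VV_def using V0[where \<psi>=\<psi> and f=h] h1 by simp

lemma SS_Suc: "SS \<psi> (Suc T) = SS \<psi> T + UU \<psi> (Suc T)" by (simp add: SS_def)

lemma sum_ge: assumes adm: "admissible_policy N \<psi>"
  shows "real T * g0 - VV \<psi> T \<le> SS \<psi> T"
proof (induction T)
  case 0 then show ?case by (simp add: VV0 SS_def)
next
  case (Suc T) then show ?case using step_ge[OF adm, of T] by (simp add: SS_Suc algebra_simps)
qed

lemma sum_eq: "SS (det_policy phi) T = real T * g0 - VV (det_policy phi) T"
proof (induction T)
  case 0 then show ?case by (simp add: VV0 SS_def)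
next
  case (Suc T) then show ?case using step_eq[of T] by (simp add: SS_Suc algebra_simps)
qed

lemma VV_nn: "0 \<le> VV \<psi> T"
  unfolding VV_def by (intro integral_nonneg_AE AE_pmfI h_nn) (auto dest: hd_supp)

definition "Cp = Ch / k0 + 1"
lemma Cp_pos: "Cp > 0"
proof -
  have "0 \<le> Ch / k0" using Ch_nn k0_pos by simp
  then show ?thesis by (simp add: Cp_def)
qed

lemma u_lower: assumes "a \<in> A" shows "k0 * (1 - Q a) * real (Suc s) ^ 2 \<le> u s a" "0 \<le> u s a"
proof -
  have q: "0 \<le> Q a" "Q a \<le> 1" using Q_bounds[OF assms] by auto
  have "real (Suc s) ^ 2 = ff s + 1" by (simp add: ff_def power2_eq_square algebra_simps)
  then have "k0 * (1 - Q a) * real (Suc s) ^ 2 = k0 * (1 - Q a) * ff s + k0 * (1 - Q a)" by (simp add: algebra_simps)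
  moreover have "k0 * (1 - Q a) \<le> k0" using q k0_pos by (simp add: mult_left_le)
  moreover have "0 \<le> \<alpha> * E a" using alpha_pos E_nonneg[OF assms] by simp
  ultimately show "k0 * (1 - Q a) * real (Suc s) ^ 2 \<le> u s a" by (simp add: u_eq)
  moreover have "0 \<le> k0 * (1 - Q a) * real (Suc s) ^ 2" using q k0_pos by simp
  ultimately show "0 \<le> u s a" by linarith
qed

lemma point_le: assumes "a \<in> A"
  shows "Q a * h 1 + (1 - Q a) * h (Suc s) \<le> Cp * u s a + Dh"
proof -
  have q: "0 \<le> 1 - Q a" "1 - Q a \<le> 1" using Q_bounds[OF assms] by auto
  have "(1 - Q a) * h (Suc s) \<le> (1 - Q a) * (Ch * real (Suc s) ^ 2 + Dh)"
    using h_upper[of "Suc s"] q by (intro mult_left_mono) auto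
  also have "\<dots> = Ch * ((1 - Q a) * real (Suc s) ^ 2) + (1 - Q a) * Dh" by (simp add: algebra_simps)
  also have "(1 - Q a) * Dh \<le> Dh" using q Dh_nn by (simp add: mult_left_le_one_le)
  also have "Ch * ((1 - Q a) * real (Suc s) ^ 2) \<le> Ch * (u s a / k0)"
    using u_lower(1)[OF assms, of s] k0_pos Ch_nn
    by (intro mult_left_mono) (auto simp: le_divide_eq algebra_simps)
  also have "Ch * (u s a / k0) \<le> Cp * u s a"
    using u_lower(2)[OF assms, of s] by (simp add: Cp_def algebra_simps)
  finally show ?thesis using h1 by simp
qed

lemma VV_le: assumes adm: "admissible_policy N \<psi>"
  shows "VV \<psi> (Suc t) \<le> Cp * UU \<psi> (Suc t) + Dh"
proof -
  have "VV \<psi> (Suc t) = Ex \<psi> t (\<lambda>s a. Q a * h 1 + (1 - Q a) * h (Suc s))"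
    using V_eq[OF adm, where f=h and t=t] by (simp add: VV_def)
  also have "\<dots> \<le> Ex \<psi> t (\<lambda>s a. Cp * u s a + Dh)"
  proof (rule Ex_mono[OF adm])
    fix x a assume "a \<in> set_pmf (\<psi> (fst x) (snd x))"
    then show "Q a * h 1 + (1 - Q a) * h (Suc (snd x)) \<le> Cp * u (snd x) a + Dh"
      using point_le psi_A[OF adm] by blast
  qed
  also have "\<dots> = Cp * UU \<psi> (Suc t) + Dh"
    using Ex_add[OF adm, of t "\<lambda>s a. Cp * u s a" "\<lambda>s a. Dh"] Ex_cmult[of \<psi> t Cp u] Ex_const[of \<psi> t Dh]
      U_eq[OF adm, of t] by (simp add: UU_def)
  finally show ?thesis .
qed

lemma upper: "avg_cost p c r \<beta> \<epsilon> (det_policy phi) \<le> ereal g0"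
  unfolding avg_SS
proof (rule Limsup_bounded)
  show "\<forall>\<^sub>F T in sequentially. ereal (1 / real T * SS (det_policy phi) T) \<le> ereal g0"
    unfolding eventually_sequentially
  proof (intro exI allI impI)
    fix T :: nat assume "1 \<le> T"
    have "SS (det_policy phi) T \<le> real T * g0" using sum_eq[of T] VV_nn[of "det_policy phi" T] by simp
    then show "ereal (1 / real T * SS (det_policy phi) T) \<le> ereal g0"
      using \<open>1 \<le> T\<close> by (simp add: divide_le_eq mult.commute)
  qed
qed

lemma lower: assumes adm: "admissible_policy N \<psi>"
  shows "ereal g0 \<le> avg_cost p c r \<beta> \<epsilon> \<psi>"
proof (rule ccontr)
  assume "\<not> ereal g0 \<le> avg_cost p c r \<beta> \<epsilon> \<psi>"
  then have "limsup (\<lambda>T. ereal (1 / real T * SS \<psi> T)) < ereal g0" by (simp add: avg_SS)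
  then obtain y where y1: "limsup (\<lambda>T. ereal (1 / real T * SS \<psi> T)) < ereal y" and y2': "ereal y < ereal g0"
    using ereal_dense2 by blast
  from y2' have y2: "y < g0" by simp
  have "\<forall>\<^sub>F T in sequentially. ereal (1 / real T * SS \<psi> T) < ereal y" by (rule Limsup_lessD[OF y1])
  then obtain T0 where T0: "\<And>T. T \<ge> T0 \<Longrightarrow> 1 / real T * SS \<psi> T < y"
    unfolding eventually_sequentially by auto
  define T0' where "T0' = max T0 1"
  have SSlt: "SS \<psi> T < y * real T" if "T \<ge> T0'" for T
  proof -
    have "T \<ge> 1" "T \<ge> T0" using that by (auto simp: T0'_def)
    then show ?thesis using T0[of T] by (simp add: divide_less_eq mult.commute)
  qed
  define \<kappa> where "\<kappa> = \<bar>y\<bar> + 1"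
  define T1 where "T1 = max T0' (nat \<lceil>(Cp * \<kappa> + Dh) / (g0 - y)\<rceil>)"
  have UUge: "\<kappa> \<le> UU \<psi> T" if "T \<ge> T1" for T
  proof -
    have "T \<ge> T0'" using that by (simp add: T1_def)
    then have "T \<ge> 1" by (simp add: T0'_def)
    then obtain t where t: "T = Suc t" by (cases T) auto
    have "(Cp * \<kappa> + Dh) / (g0 - y) \<le> real T" using that unfolding T1_def by linarith
    then have a: "Cp * \<kappa> + Dh \<le> real T * (g0 - y)" using y2 by (simp add: divide_le_eq mult.commute)
    have "real T * g0 - VV \<psi> T \<le> SS \<psi> T" by (rule sum_ge[OF adm])
    moreover have "SS \<psi> T < y * real T" by (rule SSlt[OF \<open>T \<ge> T0'\<close>])
    moreover have "VV \<psi> T \<le> Cp * UU \<psi> T + Dh" using VV_le[OF adm, of t] t by simp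
    moreover have "real T * (g0 - y) = real T * g0 - y * real T" by (simp add: algebra_simps)
    ultimately have "Cp * \<kappa> \<le> Cp * UU \<psi> T" using a by linarith
    then show ?thesis using Cp_pos by simp
  qed
  have grow: "SS \<psi> T1 + real n * \<kappa> \<le> SS \<psi> (T1 + n)" for n
  proof (induction n)
    case (Suc n)
    have "\<kappa> \<le> UU \<psi> (Suc (T1 + n))" by (rule UUge) simp
    moreover have "SS \<psi> (T1 + Suc n) = SS \<psi> (T1 + n) + UU \<psi> (Suc (T1 + n))" by (simp add: SS_Suc)
    moreover have "real (Suc n) * \<kappa> = real n * \<kappa> + \<kappa>" by (simp add: algebra_simps)
    ultimately show ?case using Suc by linarith
  qed simp
  define n where "n = nat \<lceil>y * real T1 - SS \<psi> T1\<rceil>"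
  have n1: "y * real T1 - SS \<psi> T1 \<le> real n" unfolding n_def by linarith
  have "SS \<psi> (T1 + n) < y * real (T1 + n)" by (rule SSlt) (simp add: T1_def)
  moreover have "y * real (T1 + n) = y * real T1 + y * real n" by (simp add: algebra_simps)
  ultimately have "SS \<psi> T1 + real n * \<kappa> < y * real T1 + y * real n" using grow[of n] by linarith
  moreover have "y * real n + real n \<le> real n * \<kappa>" unfolding \<kappa>_def
    using mult_right_mono[of y "\<bar>y\<bar>" "real n"] by (simp add: algebra_simps)
  ultimately show False using n1 by linarith
qed

end

theorem proposition2:
  fixes N :: nat and p c r :: "nat \<Rightarrow> real" and \<beta> \<epsilon> :: real
  assumes "N \<ge> 1"
    and "\<And>n. n \<in> {1..N} \<Longrightarrow> 0 < p n \<and> p n \<le> 1"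
    and "\<And>n. n \<in> {1..N} \<Longrightarrow> 0 \<le> c n"
    and "\<And>n. n \<in> {1..N} \<Longrightarrow> 0 < r n \<and> r n \<le> 1"
    and "0 < \<beta>" and "\<beta> < 1" and "0 < \<epsilon>"
    and distinct: "inj_on (succ_prob p r) (actions N)"
  shows "\<exists>\<phi> K b th.
           threshold_policy N \<phi> K b th \<and>
           optimal_policy N p c r \<beta> \<epsilon> (det_policy \<phi>) \<and>
           (\<forall>k. 1 \<le> k \<and> k < K \<longrightarrow>
              succ_prob p r (b (Suc k)) > succ_prob p r (b k) \<and>
              (\<forall>a\<in>actions N. succ_prob p r a > succ_prob p r (b k) \<longrightarrow>
                 gamma p c r (b k) (b (Suc k)) \<le> gamma p c r (b k) a))"
proof -
  interpret m: mdp N p c r \<beta> \<epsilon> using assms by unfold_locales auto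
  have opt: "optimal_policy N p c r \<beta> \<epsilon> (det_policy m.phi)"
    unfolding optimal_policy_def
  proof (intro conjI allI impI)
    show "admissible_policy N (det_policy m.phi)" by (rule m.det_adm)
    fix \<psi>' assume "admissible_policy N \<psi>'"
    then show "avg_cost p c r \<beta> \<epsilon> (det_policy m.phi) \<le> avg_cost p c r \<beta> \<epsilon> \<psi>'"
      using m.upper m.lower by (meson order_trans)
  qed
  have thr: "threshold_policy N m.phi m.K m.bb m.th" by (rule m.threshold)
  have ord: "\<forall>k. 1 \<le> k \<and> k < m.K \<longrightarrow>
              succ_prob p r (m.bb (Suc k)) > succ_prob p r (m.bb k) \<and>
              (\<forall>a\<in>actions N. succ_prob p r a > succ_prob p r (m.bb k) \<longrightarrow>
                 gamma p c r (m.bb k) (m.bb (Suc k)) \<le> gamma p c r (m.bb k) a)"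
    using m.order_prop by blast
  show ?thesis
    by (rule exI[of _ m.phi], rule exI[of _ m.K], rule exI[of _ m.bb], rule exI[of _ m.th])
       (intro conjI thr opt ord)
qed



end
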